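(* Let $\alpha\in L^1(\mathbb{R})$ be even and let $w\in C^1(\mathbb{R})$ be odd with $w(0)=0$; set $W(\eta)=\int_0^\eta w(\rho)\,d\rho$. Let $\varphi,\psi\in L^1(\mathbb{R})\cap L^\infty(\mathbb{R})$ and let $u$ be a solution on $[0,T)$ (with $u\in C^2([0,T'],L^1(\mathbb{R})\cap L^\infty(\mathbb{R}))$ for every $T'<T$) of $$u_{tt}(x,t)=\int_{\mathbb{R}} \alpha(y-x)\, w\big(u(y,t)-u(x,t)\big)\,dy,\qquad u(x,0)=\varphi(x),\ u_t(x,0)=\psi(x).$$ Then the energy $$E(t)=\frac12\|u_t(t)\|_2^2+\frac12\int_{\mathbb{R}^2}\alpha(y-x)\,W\big(u(y,t)-u(x,t)\big)\,dy\,dx$$ is well defined and constant for $t\in[0,T)$. *)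

theory Defs
  imports "HOL-Analysis.Analysis" "HOL-Probability.Essential_Supremum"
begin

text \<open>The Banach space X = L^1(R) \<inter> L^\<infinity>(R), with norm ||f||_1 + ||f||_\<infinity>,
  elements represented by (measurable) pointwise representatives.\<close>

definition inX :: "(real \<Rightarrow> real) \<Rightarrow> bool" where
  "inX f \<longleftrightarrow> f \<in> borel_measurable lborel \<and> integrable lborel f
           \<and> esssup lborel (\<lambda>x. ereal \<bar>f x\<bar>) < \<infinity>"

definition Xnorm :: "(real \<Rightarrow> real) \<Rightarrow> ereal" where
  "Xnorm f = enn2ereal (\<integral>\<^sup>+ x. ennreal \<bar>f x\<bar> \<partial>lborel) + esssup lborel (\<lambda>x. ereal \<bar>f x\<bar>)"

definition X_has_deriv_within ::
  "(real \<Rightarrow> real \<Rightarrow> real) \<Rightarrow> (real \<Rightarrow> real \<Rightarrow> real) \<Rightarrow> real \<Rightarrow> real set \<Rightarrow> bool" where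
  "X_has_deriv_within U V t S \<longleftrightarrow>
     ((\<lambda>h. Xnorm (\<lambda>x. (U (t + h) x - U t x) / h - V t x)) \<longlongrightarrow> 0)
       (at 0 within {h. t + h \<in> S})"

definition X_continuous_on :: "real set \<Rightarrow> (real \<Rightarrow> real \<Rightarrow> real) \<Rightarrow> bool" where
  "X_continuous_on S U \<longleftrightarrow>
     (\<forall>t\<in>S. ((\<lambda>s. Xnorm (\<lambda>x. U s x - U t x)) \<longlongrightarrow> 0) (at t within S))"

text \<open>Potential W(\<eta>) = \<integral>_0^\<eta> w (oriented integral).\<close>
definition Wpot :: "(real \<Rightarrow> real) \<Rightarrow> real \<Rightarrow> real" where
  "Wpot w \<eta> = (LBINT \<rho>=0..\<eta>. w \<rho>)"

definition energy ::
  "(real \<Rightarrow> real) \<Rightarrow> (real \<Rightarrow> real) \<Rightarrow> (real \<Rightarrow> real \<Rightarrow> real) \<Rightarrow> (real \<Rightarrow> real \<Rightarrow> real) \<Rightarrow> real \<Rightarrow> real" where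
  "energy \<alpha> w u u1 t =
     1/2 * (LINT x|lborel. (u1 t x)\<^sup>2)
   + 1/2 * (LINT p|(lborel \<Otimes>\<^sub>M lborel). \<alpha> (snd p - fst p) * Wpot w (u t (snd p) - u t (fst p)))"

end

theory Submission
  imports Defs
begin



abbreviation PP :: "(real \<times> real) measure" where "PP \<equiv> lborel \<Otimes>\<^sub>M lborel"

lemma AE_lift_fst:
  assumes "AE x in lborel. Q x" shows "AE p in PP. Q (fst p)"
proof -
  obtain N where N: "N \<in> null_sets lborel" "{x \<in> space lborel. \<not> Q x} \<subseteq> N"
    using assms by (elim AE_E3) blast
  have "N \<times> UNIV \<in> null_sets PP"
    using N by (intro lborel.times_in_null_sets1) auto
  then show ?thesis
    by (rule AE_I') (use N in \<open>auto simp: space_pair_measure\<close>)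
qed

lemma AE_lift_snd:
  assumes "AE x in lborel. Q x" shows "AE p in PP. Q (snd p)"
proof -
  obtain N where N: "N \<in> null_sets lborel" "{x \<in> space lborel. \<not> Q x} \<subseteq> N"
    using assms by (elim AE_E3) blast
  have "UNIV \<times> N \<in> null_sets PP"
    using N by (intro lborel.times_in_null_sets2) auto
  then show ?thesis
    by (rule AE_I') (use N in \<open>auto simp: space_pair_measure\<close>)
qed

lemma AE_even_pair:
  assumes "AE z in lborel. \<alpha> (- z) = (\<alpha> z :: real)"
  shows "AE p in PP. \<alpha> (fst p - snd p) = \<alpha> (snd p - fst p)"
proof -
  obtain N where N: "N \<in> null_sets lborel" "{x \<in> space lborel. \<not> \<alpha> (- x) = \<alpha> x} \<subseteq> N"
    using assms by (elim AE_E3) blast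
  have Nb[measurable]: "N \<in> sets borel" using N by auto
  define S where "S = {p \<in> space PP. snd p - fst p \<in> N}"
  have Sm[measurable]: "S \<in> sets PP" unfolding S_def by measurable
  have eq: "(\<integral>\<^sup>+y. indicator N (y - x) \<partial>lborel) = emeasure lborel N" for x
    using nn_integral_real_affine[of "indicator N" 1 "-x"] Nb by simp
  have "emeasure PP S = (\<integral>\<^sup>+p. indicator S p \<partial>PP)" by (rule nn_integral_indicator[symmetric]) (rule Sm)
  also have "\<dots> = (\<integral>\<^sup>+x. \<integral>\<^sup>+y. indicator S (x,y) \<partial>lborel \<partial>lborel)"
    by (rule lborel.nn_integral_fst[symmetric]) simp
  also have "\<dots> = (\<integral>\<^sup>+x. \<integral>\<^sup>+y. indicator N (y - x) \<partial>lborel \<partial>lborel)"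
    by (auto intro!: nn_integral_cong simp: S_def indicator_def space_pair_measure)
  also have "\<dots> = (\<integral>\<^sup>+x. emeasure lborel N \<partial>(lborel::real measure))"
    by (simp add: eq)
  also have "\<dots> = (0::ennreal)" using N by (simp add: null_sets_def)
  finally have "S \<in> null_sets PP" using Sm by auto
  then show ?thesis
    by (rule AE_I') (use N in \<open>auto simp: S_def space_pair_measure\<close>)
qed


lemma esssup_abs_nonneg: "0 \<le> esssup lborel (\<lambda>x. ereal \<bar>(f::real\<Rightarrow>real) x\<bar>)"
proof -
  have "esssup lborel (\<lambda>x::real. ereal 0) = 0"
    by (subst esssup_const) auto
  moreover have "esssup lborel (\<lambda>x::real. ereal 0) \<le> esssup lborel (\<lambda>x. ereal \<bar>f x\<bar>)"
    by (rule esssup_mono[where f="\<lambda>x. ereal 0" and M=lborel and g="\<lambda>x. ereal \<bar>f x\<bar>"]) auto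
  ultimately show ?thesis by simp
qed

lemma Xnorm_le:
  fixes f :: "real \<Rightarrow> real"
  assumes "Xnorm f \<le> ereal e"
  shows "(AE x in lborel. \<bar>f x\<bar> \<le> e) \<and> (\<integral>\<^sup>+x. ennreal \<bar>f x\<bar> \<partial>lborel) \<le> ennreal e"
proof -
  let ?a = "enn2ereal (\<integral>\<^sup>+x. ennreal \<bar>f x\<bar> \<partial>lborel)"
  let ?b = "esssup lborel (\<lambda>x. ereal \<bar>f x\<bar>)"
  have a0: "0 \<le> ?a" by simp
  have b0: "0 \<le> ?b" by (rule esssup_abs_nonneg)
  have ab: "?a + ?b \<le> ereal e" using assms unfolding Xnorm_def .
  have "?a \<le> ereal e" using ab b0 a0
    by (metis add_increasing2 order_trans add.commute order_refl add_left_mono add_0_right)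
  moreover have "?b \<le> ereal e" using ab b0 a0
    by (metis order_trans add_left_mono add_0 order_refl add.commute)
  moreover have "AE x in lborel. ereal \<bar>f x\<bar> \<le> ?b" by (rule esssup_AE)
  ultimately have "AE x in lborel. \<bar>f x\<bar> \<le> e"
    by (auto elim!: eventually_mono) (metis order_trans ereal_less_eq(3))
  moreover have "(\<integral>\<^sup>+x. ennreal \<bar>f x\<bar> \<partial>lborel) \<le> ennreal e"
    using e2ennreal_mono[OF \<open>?a \<le> ereal e\<close>] by simp
  ultimately show ?thesis by blast
qed





lemma tendsto0_I:
  fixes \<phi> :: "'a \<Rightarrow> real"
  assumes "\<And>e. 0 < e \<Longrightarrow> \<forall>\<^sub>F h in F. \<bar>\<phi> h\<bar> \<le> e"
  shows "(\<phi> \<longlongrightarrow> 0) F"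
proof (rule tendstoI)
  fix e :: real assume "0 < e"
  then have "\<forall>\<^sub>F h in F. \<bar>\<phi> h\<bar> \<le> e/2" using assms[of "e/2"] by simp
  then show "\<forall>\<^sub>F h in F. dist (\<phi> h) 0 < e"
    by (rule eventually_mono) (use \<open>0 < e\<close> in auto)
qed

lemma L1small:
  fixes f :: "real \<Rightarrow> real"
  assumes f: "f \<in> borel_measurable lborel" and le: "(\<integral>\<^sup>+x. ennreal \<bar>f x\<bar> \<partial>lborel) \<le> ennreal e"
    and e: "0 \<le> e"
  shows "integrable lborel f \<and> (LINT x|lborel. \<bar>f x\<bar>) \<le> e"
proof -
  have "integrable lborel f"
    by (rule integrableI_bounded) (use f le in \<open>auto simp: top.not_eq_extremum intro: le_less_trans\<close>)
  moreover have "ennreal (LINT x|lborel. \<bar>f x\<bar>) \<le> ennreal e"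
    using nn_integral_eq_integral[of lborel "\<lambda>x. \<bar>f x\<bar>"] \<open>integrable lborel f\<close> le by simp
  ultimately show ?thesis using e by simp
qed

lemma Xnorm_tendsto:
  fixes g :: "'a \<Rightarrow> real \<Rightarrow> real"
  assumes lim: "((\<lambda>h. Xnorm (g h)) \<longlongrightarrow> 0) F"
    and meas: "\<forall>\<^sub>F h in F. g h \<in> borel_measurable lborel"
  shows "((\<lambda>h. LINT x|lborel. \<bar>g h x\<bar>) \<longlongrightarrow> 0) F"
    and "\<And>e. 0 < e \<Longrightarrow> \<forall>\<^sub>F h in F. AE x in lborel. \<bar>g h x\<bar> \<le> e"
    and "\<forall>\<^sub>F h in F. integrable lborel (g h)"
proof -
  have ev: "\<forall>\<^sub>F h in F. (AE x in lborel. \<bar>g h x\<bar> \<le> e) \<and> integrable lborel (g h)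
             \<and> (LINT x|lborel. \<bar>g h x\<bar>) \<le> e" if e: "0 < e" for e
  proof -
    have "\<forall>\<^sub>F h in F. Xnorm (g h) < ereal e"
      using order_tendstoD(2)[OF lim, of "ereal e"] e by simp
    then show ?thesis using meas
    proof eventually_elim
      case (elim h)
      then have "Xnorm (g h) \<le> ereal e" by simp
      from Xnorm_le[OF this] L1small[of "g h" e] elim e show ?case by auto
    qed
  qed
  show "((\<lambda>h. LINT x|lborel. \<bar>g h x\<bar>) \<longlongrightarrow> 0) F"
  proof (rule tendsto0_I)
    fix e :: real assume "0 < e"
    show "\<forall>\<^sub>F h in F. \<bar>LINT x|lborel. \<bar>g h x\<bar>\<bar> \<le> e"
      using ev[OF \<open>0 < e\<close>] by eventually_elim simp
  qed
  show "\<forall>\<^sub>F h in F. AE x in lborel. \<bar>g h x\<bar> \<le> e" if "0 < e" for e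
    using ev[OF that] by (auto elim: eventually_mono)
  show "\<forall>\<^sub>F h in F. integrable lborel (g h)"
    using ev[of 1] by (auto elim: eventually_mono)
qed

lemma inX_bound:
  assumes "inX f" shows "\<exists>M\<ge>0. AE x in lborel. \<bar>f x\<bar> \<le> M"
proof -
  let ?b = "esssup lborel (\<lambda>x. ereal \<bar>f x\<bar>)"
  have b0: "0 \<le> ?b" by (rule esssup_abs_nonneg)
  have "?b < \<infinity>" using assms by (simp add: inX_def)
  then obtain r where r: "?b = ereal r" using b0 by (cases ?b) auto
  have "AE x in lborel. ereal \<bar>f x\<bar> \<le> ?b" by (rule esssup_AE)
  then have "AE x in lborel. \<bar>f x\<bar> \<le> r" by (auto simp: r elim: eventually_mono)
  moreover have "0 \<le> r" using b0 r by simp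
  ultimately show ?thesis by blast
qed

lemma int_bound:
  fixes f h :: "'a \<Rightarrow> real"
  assumes "integrable M f" "h \<in> borel_measurable M" "AE x in M. \<bar>h x\<bar> \<le> f x"
  shows "integrable M h \<and> \<bar>integral\<^sup>L M h\<bar> \<le> integral\<^sup>L M f"
proof -
  have ih: "integrable M h"
    by (rule Bochner_Integration.integrable_bound[OF assms(1,2)]) (use assms(3) in \<open>auto elim: eventually_mono\<close>)
  have "\<bar>integral\<^sup>L M h\<bar> \<le> (\<integral>x. \<bar>h x\<bar> \<partial>M)" by simp
  also have "\<dots> \<le> integral\<^sup>L M f"
    by (rule integral_mono_AE) (use ih assms in auto)
  finally show ?thesis using ih by simp
qed

lemma conv_snd:
  fixes \<alpha> g :: "real \<Rightarrow> real"
  assumes a: "integrable lborel \<alpha>" and g: "integrable lborel g"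
  shows "integrable PP (\<lambda>p. \<bar>\<alpha> (snd p - fst p)\<bar> * \<bar>g (snd p)\<bar>)
    \<and> (\<integral>p. \<bar>\<alpha> (snd p - fst p)\<bar> * \<bar>g (snd p)\<bar> \<partial>PP) = (LINT x|lborel. \<bar>\<alpha> x\<bar>) * (LINT x|lborel. \<bar>g x\<bar>)"
proof -
  have [measurable]: "\<alpha> \<in> borel_measurable borel" "g \<in> borel_measurable borel"
    using a g by (auto dest: borel_measurable_integrable)
  have A: "(\<integral>\<^sup>+x. ennreal \<bar>\<alpha> x\<bar> \<partial>lborel) = ennreal (LINT x|lborel. \<bar>\<alpha> x\<bar>)"
    using a by (intro nn_integral_eq_integral) auto
  have G: "(\<integral>\<^sup>+x. ennreal \<bar>g x\<bar> \<partial>lborel) = ennreal (LINT x|lborel. \<bar>g x\<bar>)"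
    using g by (intro nn_integral_eq_integral) auto
  have sh: "(\<integral>\<^sup>+x. ennreal \<bar>\<alpha> (y - x)\<bar> \<partial>lborel) = ennreal (LINT x|lborel. \<bar>\<alpha> x\<bar>)" for y
    using nn_integral_real_affine[of "\<lambda>x. ennreal \<bar>\<alpha> x\<bar>" "-1" y] A by simp
  have "(\<integral>\<^sup>+p. ennreal (\<bar>\<alpha> (snd p - fst p)\<bar> * \<bar>g (snd p)\<bar>) \<partial>PP)
      = (\<integral>\<^sup>+y. \<integral>\<^sup>+x. ennreal (\<bar>\<alpha> (y - x)\<bar> * \<bar>g y\<bar>) \<partial>lborel \<partial>lborel)"
    by (subst lborel_pair.nn_integral_snd[symmetric]) auto
  also have "\<dots> = (\<integral>\<^sup>+y. ennreal \<bar>g y\<bar> * ennreal (LINT x|lborel. \<bar>\<alpha> x\<bar>) \<partial>lborel)"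
  proof (intro nn_integral_cong)
    fix y :: real
    have "(\<integral>\<^sup>+x. ennreal (\<bar>\<alpha> (y - x)\<bar> * \<bar>g y\<bar>) \<partial>lborel)
        = (\<integral>\<^sup>+x. ennreal \<bar>g y\<bar> * ennreal \<bar>\<alpha> (y - x)\<bar> \<partial>lborel)"
      by (simp add: ennreal_mult' mult.commute)
    also have "\<dots> = ennreal \<bar>g y\<bar> * (\<integral>\<^sup>+x. ennreal \<bar>\<alpha> (y - x)\<bar> \<partial>lborel)"
      by (rule nn_integral_cmult) measurable
    finally show "(\<integral>\<^sup>+x. ennreal (\<bar>\<alpha> (y - x)\<bar> * \<bar>g y\<bar>) \<partial>lborel)
        = ennreal \<bar>g y\<bar> * ennreal (LINT x|lborel. \<bar>\<alpha> x\<bar>)" by (simp add: sh)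
  qed
  also have "\<dots> = ennreal ((LINT x|lborel. \<bar>\<alpha> x\<bar>) * (LINT x|lborel. \<bar>g x\<bar>))"
    by (simp add: nn_integral_multc G ennreal_mult' mult.commute)
  finally have eq: "(\<integral>\<^sup>+p. ennreal (\<bar>\<alpha> (snd p - fst p)\<bar> * \<bar>g (snd p)\<bar>) \<partial>PP)
     = ennreal ((LINT x|lborel. \<bar>\<alpha> x\<bar>) * (LINT x|lborel. \<bar>g x\<bar>))" .
  have int: "integrable PP (\<lambda>p. \<bar>\<alpha> (snd p - fst p)\<bar> * \<bar>g (snd p)\<bar>)"
    by (rule integrableI_nn_integral_finite[OF _ _ eq]) auto
  moreover have "(\<integral>p. \<bar>\<alpha> (snd p - fst p)\<bar> * \<bar>g (snd p)\<bar> \<partial>PP) = (LINT x|lborel. \<bar>\<alpha> x\<bar>) * (LINT x|lborel. \<bar>g x\<bar>)"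
    using nn_integral_eq_integral[OF int] eq by (simp add: ennreal_inj)
  ultimately show ?thesis by blast
qed

lemma conv_fst:
  fixes \<alpha> g :: "real \<Rightarrow> real"
  assumes a: "integrable lborel \<alpha>" and g: "integrable lborel g"
  shows "integrable PP (\<lambda>p. \<bar>\<alpha> (snd p - fst p)\<bar> * \<bar>g (fst p)\<bar>)
    \<and> (\<integral>p. \<bar>\<alpha> (snd p - fst p)\<bar> * \<bar>g (fst p)\<bar> \<partial>PP) = (LINT x|lborel. \<bar>\<alpha> x\<bar>) * (LINT x|lborel. \<bar>g x\<bar>)"
proof -
  have [measurable]: "\<alpha> \<in> borel_measurable borel" "g \<in> borel_measurable borel"
    using a g by (auto dest: borel_measurable_integrable)
  have A: "(\<integral>\<^sup>+x. ennreal \<bar>\<alpha> x\<bar> \<partial>lborel) = ennreal (LINT x|lborel. \<bar>\<alpha> x\<bar>)"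
    using a by (intro nn_integral_eq_integral) auto
  have G: "(\<integral>\<^sup>+x. ennreal \<bar>g x\<bar> \<partial>lborel) = ennreal (LINT x|lborel. \<bar>g x\<bar>)"
    using g by (intro nn_integral_eq_integral) auto
  have sh: "(\<integral>\<^sup>+y. ennreal \<bar>\<alpha> (y - x)\<bar> \<partial>lborel) = ennreal (LINT x|lborel. \<bar>\<alpha> x\<bar>)" for x
    using nn_integral_real_affine[of "\<lambda>x. ennreal \<bar>\<alpha> x\<bar>" "1" "-x"] A by simp
  have "(\<integral>\<^sup>+p. ennreal (\<bar>\<alpha> (snd p - fst p)\<bar> * \<bar>g (fst p)\<bar>) \<partial>PP)
      = (\<integral>\<^sup>+x. \<integral>\<^sup>+y. ennreal (\<bar>\<alpha> (y - x)\<bar> * \<bar>g x\<bar>) \<partial>lborel \<partial>lborel)"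
    by (subst lborel.nn_integral_fst[symmetric]) auto
  also have "\<dots> = (\<integral>\<^sup>+x. ennreal \<bar>g x\<bar> * ennreal (LINT x|lborel. \<bar>\<alpha> x\<bar>) \<partial>lborel)"
  proof (intro nn_integral_cong)
    fix x :: real
    have "(\<integral>\<^sup>+y. ennreal (\<bar>\<alpha> (y - x)\<bar> * \<bar>g x\<bar>) \<partial>lborel)
        = (\<integral>\<^sup>+y. ennreal \<bar>g x\<bar> * ennreal \<bar>\<alpha> (y - x)\<bar> \<partial>lborel)"
      by (simp add: ennreal_mult' mult.commute)
    also have "\<dots> = ennreal \<bar>g x\<bar> * (\<integral>\<^sup>+y. ennreal \<bar>\<alpha> (y - x)\<bar> \<partial>lborel)"
      by (rule nn_integral_cmult) measurable
    finally show "(\<integral>\<^sup>+y. ennreal (\<bar>\<alpha> (y - x)\<bar> * \<bar>g x\<bar>) \<partial>lborel)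
        = ennreal \<bar>g x\<bar> * ennreal (LINT x|lborel. \<bar>\<alpha> x\<bar>)" by (simp add: sh)
  qed
  also have "\<dots> = ennreal ((LINT x|lborel. \<bar>\<alpha> x\<bar>) * (LINT x|lborel. \<bar>g x\<bar>))"
    by (simp add: nn_integral_multc G ennreal_mult' mult.commute)
  finally have eq: "(\<integral>\<^sup>+p. ennreal (\<bar>\<alpha> (snd p - fst p)\<bar> * \<bar>g (fst p)\<bar>) \<partial>PP)
     = ennreal ((LINT x|lborel. \<bar>\<alpha> x\<bar>) * (LINT x|lborel. \<bar>g x\<bar>))" .
  have int: "integrable PP (\<lambda>p. \<bar>\<alpha> (snd p - fst p)\<bar> * \<bar>g (fst p)\<bar>)"
    by (rule integrableI_nn_integral_finite[OF _ _ eq]) auto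
  moreover have "(\<integral>p. \<bar>\<alpha> (snd p - fst p)\<bar> * \<bar>g (fst p)\<bar> \<partial>PP) = (LINT x|lborel. \<bar>\<alpha> x\<bar>) * (LINT x|lborel. \<bar>g x\<bar>)"
    using nn_integral_eq_integral[OF int] eq by (simp add: ennreal_inj)
  ultimately show ?thesis by blast
qed



lemma Wpot_deriv:
  assumes w: "continuous_on UNIV w"
  shows "(Wpot w has_real_derivative w x) (at x)"
proof -
  define d where "d = - \<bar>x\<bar> - 1"
  define e where "e = \<bar>x\<bar> + 1"
  have "((\<lambda>u. LBINT y=0..u. w y) has_vector_derivative w x) (at x within {d..e})"
    using interval_integral_FTC2[of d 0 e w x] continuous_on_subset[OF w]
    by (auto simp: d_def e_def zero_ereal_def)
  then have "((\<lambda>u. LBINT y=0..u. w y) has_vector_derivative w x) (at x within {d<..<e})"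
    by (rule has_vector_derivative_within_subset) auto
  then have "((\<lambda>u. LBINT y=0..u. w y) has_vector_derivative w x) (at x)"
    by (subst (asm) has_vector_derivative_within_open) (auto simp: d_def e_def)
  moreover have "Wpot w = (\<lambda>u. LBINT y=0..u. w y)" by (rule ext) (simp add: Wpot_def)
  ultimately show ?thesis
    by (simp add: has_real_derivative_iff_has_vector_derivative)
qed

lemma Wpot_0: "Wpot w 0 = 0"
  by (simp add: Wpot_def zero_ereal_def)

lemma Wpot_cont: "continuous_on UNIV w \<Longrightarrow> continuous_on UNIV (Wpot w)"
  using Wpot_deriv by (meson DERIV_isCont continuous_at_imp_continuous_on)

lemma Wpot_mvt:
  assumes w: "continuous_on UNIV w"
  shows "\<exists>z. min a b \<le> z \<and> z \<le> max a b \<and> Wpot w b - Wpot w a = (b - a) * w z"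
proof (cases a b rule: linorder_cases)
  case less
  from MVT2[OF less] Wpot_deriv[OF w] obtain z where "a < z" "z < b" "Wpot w b - Wpot w a = (b - a) * w z"
    by blast
  then show ?thesis using less by (intro exI[of _ z]) auto
next
  case equal then show ?thesis by (intro exI[of _ a]) auto
next
  case greater
  from MVT2[OF greater] Wpot_deriv[OF w] obtain z where "b < z" "z < a" "Wpot w a - Wpot w b = (a - b) * w z"
    by blast
  then show ?thesis using greater by (intro exI[of _ z]) (auto simp: algebra_simps)
qed

lemma w_bound:
  assumes w: "continuous_on UNIV (w::real\<Rightarrow>real)"
  shows "\<exists>C\<ge>0. \<forall>a. \<bar>a\<bar> \<le> R \<longrightarrow> \<bar>w a\<bar> \<le> C \<and> \<bar>Wpot w a\<bar> \<le> C * \<bar>a\<bar>"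
proof -
  have "compact (w ` cball 0 R)"
    by (rule compact_continuous_image) (use w in \<open>auto intro: continuous_on_subset\<close>)
  then have "bounded (w ` cball 0 R)" by (rule compact_imp_bounded)
  then obtain C where C: "\<forall>y\<in>w ` cball 0 R. \<bar>y\<bar> \<le> C" by (auto simp: bounded_real)
  have Cw: "\<bar>w a\<bar> \<le> max C 0" if "\<bar>a\<bar> \<le> R" for a
    using C that by (metis image_eqI mem_cball_0 real_norm_def max.coboundedI1)
  have "\<bar>Wpot w a\<bar> \<le> max C 0 * \<bar>a\<bar>" if a: "\<bar>a\<bar> \<le> R" for a
  proof -
    obtain z where z: "min 0 a \<le> z" "z \<le> max 0 a" "Wpot w a - Wpot w 0 = (a - 0) * w z"
      using Wpot_mvt[OF w, of 0 a] by blast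
    have "\<bar>z\<bar> \<le> R" using z a by (auto simp: min_def max_def split: if_splits)
    then have "\<bar>w z\<bar> \<le> max C 0" by (rule Cw)
    then show ?thesis using z by (simp add: Wpot_0 abs_mult mult.commute mult_left_mono)
  qed
  then show ?thesis using Cw by (intro exI[of _ "max C 0"]) auto
qed

lemma W_taylor:
  assumes w: "continuous_on UNIV (w::real\<Rightarrow>real)" and e: "0 < e"
  shows "\<exists>\<delta>>0. \<forall>a b. \<bar>a\<bar> \<le> R \<longrightarrow> \<bar>b\<bar> \<le> R \<longrightarrow> \<bar>b - a\<bar> \<le> \<delta> \<longrightarrow>
            \<bar>Wpot w b - Wpot w a - w a * (b - a)\<bar> \<le> e * \<bar>b - a\<bar>"
proof -
  have "uniformly_continuous_on (cball 0 R) w"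
    by (rule compact_uniformly_continuous) (use w in \<open>auto intro: continuous_on_subset\<close>)
  then obtain d where d: "d > 0" "\<forall>x\<in>cball 0 R. \<forall>x'\<in>cball 0 R. dist x' x < d \<longrightarrow> dist (w x') (w x) < e"
    unfolding uniformly_continuous_on_def using e by metis
  have "\<bar>Wpot w b - Wpot w a - w a * (b - a)\<bar> \<le> e * \<bar>b - a\<bar>"
    if ab: "\<bar>a\<bar> \<le> R" "\<bar>b\<bar> \<le> R" "\<bar>b - a\<bar> \<le> d/2" for a b
  proof -
    obtain z where z: "min a b \<le> z" "z \<le> max a b" "Wpot w b - Wpot w a = (b - a) * w z"
      using Wpot_mvt[OF w, of a b] by blast
    have zR: "\<bar>z\<bar> \<le> R" using z ab by (auto simp: min_def max_def split: if_splits)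
    have "\<bar>z - a\<bar> \<le> \<bar>b - a\<bar>" using z by (auto simp: min_def max_def split: if_splits)
    then have "dist z a < d" using ab d(1) by (simp add: dist_real_def)
    then have "\<bar>w z - w a\<bar> < e" using d(2) zR ab by (auto simp: dist_real_def)
    then have "\<bar>b - a\<bar> * \<bar>w z - w a\<bar> \<le> \<bar>b - a\<bar> * e"
      by (intro mult_left_mono) auto
    moreover have "Wpot w b - Wpot w a - w a * (b - a) = (b - a) * (w z - w a)"
      using z by (simp add: algebra_simps)
    ultimately show ?thesis by (simp add: abs_mult mult.commute)
  qed
  then show ?thesis using d(1) by (intro exI[of _ "d/2"]) auto
qed




lemma abs3_bound:
  fixes x y z C :: real
  assumes "\<bar>y\<bar> \<le> C" shows "\<bar>x * y * z\<bar> \<le> C * (\<bar>x\<bar> * \<bar>z\<bar>)"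
proof -
  have "\<bar>x * y * z\<bar> = \<bar>y\<bar> * (\<bar>x\<bar> * \<bar>z\<bar>)" by (simp add: abs_mult)
  also have "\<dots> \<le> C * (\<bar>x\<bar> * \<bar>z\<bar>)" using assms by (intro mult_right_mono) auto
  finally show ?thesis .
qed

lemma sq_bound:
  fixes a M :: real
  assumes "\<bar>a\<bar> \<le> M" shows "\<bar>a\<^sup>2\<bar> \<le> M * \<bar>a\<bar>"
proof -
  have "\<bar>a\<^sup>2\<bar> = \<bar>a\<bar> * \<bar>a\<bar>" by (simp add: power2_eq_square abs_mult)
  also have "\<dots> \<le> M * \<bar>a\<bar>" using assms by (intro mult_right_mono) auto
  finally show ?thesis .
qed

locale en_setup =
  fixes \<alpha> w :: "real \<Rightarrow> real" and u u1 u2 :: "real \<Rightarrow> real \<Rightarrow> real" and I :: "real set"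
  assumes alpha_L1: "integrable lborel \<alpha>"
    and alpha_even: "AE x in lborel. \<alpha> (- x) = \<alpha> x"
    and w_cont: "continuous_on UNIV w"
    and w_odd: "\<forall>x. w (- x) = - w x"
    and u_X: "\<forall>t\<in>I. inX (u t) \<and> inX (u1 t) \<and> inX (u2 t)"
    and u_d1: "\<forall>t\<in>I. X_has_deriv_within u u1 t I"
    and u_d2: "\<forall>t\<in>I. X_has_deriv_within u1 u2 t I"
    and eqn: "\<forall>t\<in>I. AE x in lborel.
                u2 t x = (LINT y|lborel. \<alpha> (y - x) * w (u t y - u t x))"
begin

lemma meas_glob[measurable]:
  "\<alpha> \<in> borel_measurable borel" "w \<in> borel_measurable borel" "Wpot w \<in> borel_measurable borel"
  using alpha_L1 borel_measurable_integrable apply fastforce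
  using w_cont borel_measurable_continuous_onI apply blast
  using Wpot_cont[OF w_cont] borel_measurable_continuous_onI by blast

lemma uX:
  assumes "s \<in> I"
  shows "u s \<in> borel_measurable borel" "u1 s \<in> borel_measurable borel" "u2 s \<in> borel_measurable borel"
    "integrable lborel (u s)" "integrable lborel (u1 s)" "integrable lborel (u2 s)"
    "inX (u s)" "inX (u1 s)" "inX (u2 s)"
  using u_X assms by (auto simp: inX_def)

lemma int_W:
  assumes s: "s \<in> I"
  shows "integrable PP (\<lambda>p. \<alpha> (snd p - fst p) * Wpot w (u s (snd p) - u s (fst p)))"
proof -
  note [measurable] = uX(1)[OF s]
  obtain M where M: "M \<ge> 0" "AE x in lborel. \<bar>u s x\<bar> \<le> M" using inX_bound[OF uX(7)[OF s]] by blast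
  obtain C where C: "C \<ge> 0" "\<forall>a. \<bar>a\<bar> \<le> 2*M \<longrightarrow> \<bar>w a\<bar> \<le> C \<and> \<bar>Wpot w a\<bar> \<le> C * \<bar>a\<bar>"
    using w_bound[OF w_cont, of "2*M"] by blast
  have i1: "integrable PP (\<lambda>p. \<bar>\<alpha> (snd p - fst p)\<bar> * \<bar>u s (snd p)\<bar>)"
    using conv_snd[OF alpha_L1 uX(4)[OF s]] by blast
  have i2: "integrable PP (\<lambda>p. \<bar>\<alpha> (snd p - fst p)\<bar> * \<bar>u s (fst p)\<bar>)"
    using conv_fst[OF alpha_L1 uX(4)[OF s]] by blast
  have "integrable PP (\<lambda>p. C * (\<bar>\<alpha> (snd p - fst p)\<bar> * \<bar>u s (snd p)\<bar> + \<bar>\<alpha> (snd p - fst p)\<bar> * \<bar>u s (fst p)\<bar>))"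
    using i1 i2 by auto
  moreover have "AE p in PP. \<bar>\<alpha> (snd p - fst p) * Wpot w (u s (snd p) - u s (fst p))\<bar>
       \<le> C * (\<bar>\<alpha> (snd p - fst p)\<bar> * \<bar>u s (snd p)\<bar> + \<bar>\<alpha> (snd p - fst p)\<bar> * \<bar>u s (fst p)\<bar>)"
    using AE_lift_fst[OF M(2)] AE_lift_snd[OF M(2)]
  proof eventually_elim
    case (elim p)
    let ?a = "u s (snd p) - u s (fst p)"
    have "\<bar>?a\<bar> \<le> 2*M" using elim by auto
    then have "\<bar>Wpot w ?a\<bar> \<le> C * \<bar>?a\<bar>" using C by blast
    also have "\<dots> \<le> C * (\<bar>u s (snd p)\<bar> + \<bar>u s (fst p)\<bar>)" using C(1) by (intro mult_left_mono) auto
    finally have "\<bar>\<alpha> (snd p - fst p)\<bar> * \<bar>Wpot w ?a\<bar> \<le> \<bar>\<alpha> (snd p - fst p)\<bar> * (C * (\<bar>u s (snd p)\<bar> + \<bar>u s (fst p)\<bar>))"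
      by (intro mult_left_mono) auto
    then show ?case by (simp add: abs_mult algebra_simps)
  qed
  moreover have "(\<lambda>p. \<alpha> (snd p - fst p) * Wpot w (u s (snd p) - u s (fst p))) \<in> borel_measurable PP"
    by measurable
  ultimately show ?thesis
    using int_bound[of PP] by blast
qed


lemma w_ae:
  assumes s: "s \<in> I"
  shows "\<exists>C\<ge>0. AE p in PP. \<bar>w (u s (snd p) - u s (fst p))\<bar> \<le> C"
proof -
  obtain M where M: "M \<ge> 0" "AE x in lborel. \<bar>u s x\<bar> \<le> M" using inX_bound[OF uX(7)[OF s]] by blast
  obtain C where C: "C \<ge> 0" "\<forall>a. \<bar>a\<bar> \<le> 2*M \<longrightarrow> \<bar>w a\<bar> \<le> C \<and> \<bar>Wpot w a\<bar> \<le> C * \<bar>a\<bar>"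
    using w_bound[OF w_cont, of "2*M"] by blast
  have "AE p in PP. \<bar>w (u s (snd p) - u s (fst p))\<bar> \<le> C"
    using AE_lift_fst[OF M(2)] AE_lift_snd[OF M(2)]
  proof eventually_elim
    case (elim p)
    then have "\<bar>u s (snd p) - u s (fst p)\<bar> \<le> 2*M" by auto
    then show ?case using C by blast
  qed
  then show ?thesis using C(1) by blast
qed

lemma int_wv:
  assumes t: "t \<in> I" and s: "s \<in> I"
  shows "integrable PP (\<lambda>p. \<alpha> (snd p - fst p) * w (u t (snd p) - u t (fst p)) * u1 s (snd p))"
    "integrable PP (\<lambda>p. \<alpha> (snd p - fst p) * w (u t (snd p) - u t (fst p)) * u1 s (fst p))"
proof -
  note [measurable] = uX(1,2)[OF t] uX(1,2)[OF s]
  obtain C where C: "C \<ge> 0" "AE p in PP. \<bar>w (u t (snd p) - u t (fst p))\<bar> \<le> C" using w_ae[OF t] by blast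
  have i1: "integrable PP (\<lambda>p. C * (\<bar>\<alpha> (snd p - fst p)\<bar> * \<bar>u1 s (snd p)\<bar>))"
    using conv_snd[OF alpha_L1 uX(5)[OF s]] by auto
  have i2: "integrable PP (\<lambda>p. C * (\<bar>\<alpha> (snd p - fst p)\<bar> * \<bar>u1 s (fst p)\<bar>))"
    using conv_fst[OF alpha_L1 uX(5)[OF s]] by auto
  have "AE p in PP. \<bar>\<alpha> (snd p - fst p) * w (u t (snd p) - u t (fst p)) * u1 s (snd p)\<bar>
     \<le> C * (\<bar>\<alpha> (snd p - fst p)\<bar> * \<bar>u1 s (snd p)\<bar>)"
    using C(2) by eventually_elim (rule abs3_bound)
  moreover have "(\<lambda>p. \<alpha> (snd p - fst p) * w (u t (snd p) - u t (fst p)) * u1 s (snd p)) \<in> borel_measurable PP"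
    by measurable
  ultimately show "integrable PP (\<lambda>p. \<alpha> (snd p - fst p) * w (u t (snd p) - u t (fst p)) * u1 s (snd p))"
    using int_bound[OF i1] by blast
  have "AE p in PP. \<bar>\<alpha> (snd p - fst p) * w (u t (snd p) - u t (fst p)) * u1 s (fst p)\<bar>
     \<le> C * (\<bar>\<alpha> (snd p - fst p)\<bar> * \<bar>u1 s (fst p)\<bar>)"
    using C(2) by eventually_elim (rule abs3_bound)
  moreover have "(\<lambda>p. \<alpha> (snd p - fst p) * w (u t (snd p) - u t (fst p)) * u1 s (fst p)) \<in> borel_measurable PP"
    by measurable
  ultimately show "integrable PP (\<lambda>p. \<alpha> (snd p - fst p) * w (u t (snd p) - u t (fst p)) * u1 s (fst p))"
    using int_bound[OF i2] by blast
qed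

lemma sym2:
  assumes t: "t \<in> I"
  shows "(\<integral>p. \<alpha> (snd p - fst p) * w (u t (snd p) - u t (fst p)) * u1 t (fst p) \<partial>PP)
       = (LINT x|lborel. u1 t x * u2 t x)"
proof -
  note [measurable] = uX(1,2,3)[OF t]
  have "(\<integral>p. \<alpha> (snd p - fst p) * w (u t (snd p) - u t (fst p)) * u1 t (fst p) \<partial>PP)
      = (LINT x|lborel. LINT y|lborel. \<alpha> (y - x) * w (u t y - u t x) * u1 t x)"
    using lborel_pair.integral_fst'[OF int_wv(2)[OF t t]] by simp
  also have "\<dots> = (LINT x|lborel. (LINT y|lborel. \<alpha> (y - x) * w (u t y - u t x)) * u1 t x)"
    by simp
  also have "\<dots> = (LINT x|lborel. u1 t x * u2 t x)"
  proof (rule integral_cong_AE)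
    show "(\<lambda>x. (LINT y|lborel. \<alpha> (y - x) * w (u t y - u t x)) * u1 t x) \<in> borel_measurable lborel"
      by measurable
    show "(\<lambda>x. u1 t x * u2 t x) \<in> borel_measurable lborel" by measurable
    show "AE x in lborel. (LINT y|lborel. \<alpha> (y - x) * w (u t y - u t x)) * u1 t x = u1 t x * u2 t x"
      using eqn t by (auto elim!: eventually_mono)
  qed
  finally show ?thesis .
qed

lemma sym1:
  assumes t: "t \<in> I"
  shows "(\<integral>p. \<alpha> (snd p - fst p) * w (u t (snd p) - u t (fst p)) * u1 t (snd p) \<partial>PP)
       = - (\<integral>p. \<alpha> (snd p - fst p) * w (u t (snd p) - u t (fst p)) * u1 t (fst p) \<partial>PP)"
proof -
  note [measurable] = uX(1,2,3)[OF t]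
  have "(\<integral>p. \<alpha> (snd p - fst p) * w (u t (snd p) - u t (fst p)) * u1 t (snd p) \<partial>PP)
      = (\<integral>(x,y). \<alpha> (x - y) * w (u t x - u t y) * u1 t x \<partial>PP)"
    by (subst lborel_pair.integral_product_swap[symmetric]) (auto simp: case_prod_beta)
  also have "\<dots> = (\<integral>p. - (\<alpha> (snd p - fst p) * w (u t (snd p) - u t (fst p)) * u1 t (fst p)) \<partial>PP)"
  proof (rule integral_cong_AE)
    show "(\<lambda>(x,y). \<alpha> (x - y) * w (u t x - u t y) * u1 t x) \<in> borel_measurable PP" by measurable
    show "(\<lambda>p. - (\<alpha> (snd p - fst p) * w (u t (snd p) - u t (fst p)) * u1 t (fst p))) \<in> borel_measurable PP"
      by measurable
    show "AE p in PP. (case p of (x,y) \<Rightarrow> \<alpha> (x - y) * w (u t x - u t y) * u1 t x)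
        = - (\<alpha> (snd p - fst p) * w (u t (snd p) - u t (fst p)) * u1 t (fst p))"
      using AE_even_pair[OF alpha_even]
    proof eventually_elim
      case (elim p)
      have "w (u t (fst p) - u t (snd p)) = - w (u t (snd p) - u t (fst p))"
        using w_odd[rule_format, of "u t (snd p) - u t (fst p)"] by simp
      then show ?case using elim by (simp add: case_prod_beta)
    qed
  qed
  also have "\<dots> = - (\<integral>p. \<alpha> (snd p - fst p) * w (u t (snd p) - u t (fst p)) * u1 t (fst p) \<partial>PP)"
    by simp
  finally show ?thesis .
qed

lemma int_K:
  assumes s: "s \<in> I"
  shows "integrable lborel (\<lambda>x. (u1 s x)\<^sup>2)"
proof -
  note [measurable] = uX(2)[OF s]
  obtain M where M: "M \<ge> 0" "AE x in lborel. \<bar>u1 s x\<bar> \<le> M" using inX_bound[OF uX(8)[OF s]] by blast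
  have "integrable lborel (\<lambda>x. M * \<bar>u1 s x\<bar>)" using uX(5)[OF s] by auto
  moreover have "AE x in lborel. \<bar>(u1 s x)\<^sup>2\<bar> \<le> M * \<bar>u1 s x\<bar>"
    using M(2) by eventually_elim (rule sq_bound)
  moreover have "(\<lambda>x. (u1 s x)\<^sup>2) \<in> borel_measurable lborel" by measurable
  ultimately show ?thesis using int_bound by blast
qed

end


lemma ev_F:
  assumes "0 < (r::real)"
  shows "\<forall>\<^sub>F h in at 0 within S. h \<in> S \<and> h \<noteq> 0 \<and> \<bar>h\<bar> < r"
  unfolding eventually_at using assms by (intro exI[of _ r]) (auto simp: dist_real_def)

lemma abs_ident_tendsto: "((\<lambda>h::real. \<bar>h\<bar>) \<longlongrightarrow> 0) (at 0 within S)"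
  using tendsto_rabs_zero[OF tendsto_ident_at[of 0 S]] by simp

context en_setup
begin

lemma KD:
  assumes t: "t \<in> I"
  shows "((\<lambda>h. ((LINT x|lborel. (u1 (t+h) x)\<^sup>2) - (LINT x|lborel. (u1 t x)\<^sup>2)) / h)
          \<longlongrightarrow> 2 * (LINT x|lborel. u1 t x * u2 t x)) (at 0 within {h. t + h \<in> I})"
proof -
  define F where "F = at (0::real) within {h. t + h \<in> I}"
  define gd where "gd = (\<lambda>h x. (u1 (t + h) x - u1 t x) / h - u2 t x)"
  note [measurable] = uX(1,2,3)[OF t]
  have lim: "((\<lambda>h. Xnorm (gd h)) \<longlongrightarrow> 0) F"
    using u_d2 t unfolding X_has_deriv_within_def F_def gd_def by blast
  have meas: "\<forall>\<^sub>F h in F. gd h \<in> borel_measurable lborel"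
    using ev_F[OF zero_less_one, of "{h. t + h \<in> I}"] unfolding F_def
  proof eventually_elim
    case (elim h)
    then have [measurable]: "u1 (t+h) \<in> borel_measurable borel" using uX(2) by auto
    show ?case unfolding gd_def by measurable
  qed
  note XT = Xnorm_tendsto[OF lim meas]
  obtain Mv where Mv: "Mv \<ge> 0" "AE x in lborel. \<bar>u1 t x\<bar> \<le> Mv" using inX_bound[OF uX(8)[OF t]] by blast
  obtain Mq where Mq: "Mq \<ge> 0" "AE x in lborel. \<bar>u2 t x\<bar> \<le> Mq" using inX_bound[OF uX(9)[OF t]] by blast
  define r where "r = 1 / (Mq + 2)"
  have r0: "r > 0" using Mq by (simp add: r_def)
  define T1 where "T1 = (\<lambda>h. LINT x|lborel. gd h x * (u1 (t+h) x + u1 t x))"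
  define T2 where "T2 = (\<lambda>h. LINT x|lborel. u2 t x * (u1 (t+h) x - u1 t x))"
  have ivq: "integrable lborel (\<lambda>x. u1 t x * u2 t x)"
  proof -
    have "integrable lborel (\<lambda>x. Mq * \<bar>u1 t x\<bar>)" using uX(5)[OF t] by auto
    moreover have "AE x in lborel. \<bar>u1 t x * u2 t x\<bar> \<le> Mq * \<bar>u1 t x\<bar>"
      using Mq(2)
    proof eventually_elim
      case (elim x)
      have "\<bar>u1 t x\<bar> * \<bar>u2 t x\<bar> \<le> \<bar>u1 t x\<bar> * Mq" using elim by (intro mult_left_mono) auto
      then show ?case by (simp add: abs_mult mult.commute)
    qed
    moreover have "(\<lambda>x. u1 t x * u2 t x) \<in> borel_measurable lborel" by measurable
    ultimately show ?thesis using int_bound by blast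
  qed
  have main: "\<forall>\<^sub>F h in F. ((LINT x|lborel. (u1 (t+h) x)\<^sup>2) - (LINT x|lborel. (u1 t x)\<^sup>2)) / h
                 - 2 * (LINT x|lborel. u1 t x * u2 t x) = T1 h + T2 h
              \<and> \<bar>T1 h\<bar> \<le> (2 * Mv + 1) * (LINT x|lborel. \<bar>gd h x\<bar>)
              \<and> \<bar>T2 h\<bar> \<le> \<bar>h\<bar> * ((1 + Mq) * (LINT x|lborel. \<bar>u2 t x\<bar>))"
    using ev_F[OF r0, of "{h. t + h \<in> I}"] XT(2)[OF zero_less_one] XT(3) unfolding F_def[symmetric]
  proof eventually_elim
    case (elim h)
    then have th: "t + h \<in> I" and h0: "h \<noteq> 0" and hr: "\<bar>h\<bar> < r" by auto
    note [measurable] = uX(2)[OF th]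
    have hq: "\<bar>h\<bar> * (1 + Mq) \<le> 1"
    proof -
      have "\<bar>h\<bar> * (1 + Mq) \<le> r * (1 + Mq)" using hr Mq by (intro mult_right_mono) auto
      also have "\<dots> \<le> 1" using Mq by (simp add: r_def field_simps)
      finally show ?thesis .
    qed
    have diff: "AE x in lborel. \<bar>u1 (t+h) x - u1 t x\<bar> \<le> \<bar>h\<bar> * (1 + Mq)"
      using elim(2) Mq(2)
    proof eventually_elim
      case (elim x)
      have "u1 (t+h) x - u1 t x = h * (gd h x + u2 t x)" using h0 by (simp add: gd_def field_simps)
      then have "\<bar>u1 (t+h) x - u1 t x\<bar> = \<bar>h\<bar> * \<bar>gd h x + u2 t x\<bar>" by (simp add: abs_mult)
      also have "\<dots> \<le> \<bar>h\<bar> * (1 + Mq)"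
        using elim by (intro mult_left_mono) auto
      finally show ?case .
    qed
    have gm[measurable]: "gd h \<in> borel_measurable borel" unfolding gd_def by measurable
    have igd: "integrable lborel (gd h)" using elim by auto
    have b1: "integrable lborel (\<lambda>x. gd h x * (u1 (t+h) x + u1 t x))
         \<and> \<bar>T1 h\<bar> \<le> (LINT x|lborel. (2 * Mv + 1) * \<bar>gd h x\<bar>)"
      unfolding T1_def
    proof (rule int_bound)
      show "integrable lborel (\<lambda>x. (2 * Mv + 1) * \<bar>gd h x\<bar>)" using igd by auto
      show "(\<lambda>x. gd h x * (u1 (t+h) x + u1 t x)) \<in> borel_measurable lborel" by measurable
      show "AE x in lborel. \<bar>gd h x * (u1 (t+h) x + u1 t x)\<bar> \<le> (2 * Mv + 1) * \<bar>gd h x\<bar>"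
        using diff Mv(2)
      proof eventually_elim
        case (elim x)
        have "\<bar>u1 (t+h) x + u1 t x\<bar> \<le> 2 * Mv + 1" using elim hq by linarith
        then have "\<bar>gd h x\<bar> * \<bar>u1 (t+h) x + u1 t x\<bar> \<le> \<bar>gd h x\<bar> * (2 * Mv + 1)"
          by (intro mult_left_mono) auto
        then show ?case by (simp add: abs_mult mult.commute)
      qed
    qed
    have b2: "integrable lborel (\<lambda>x. u2 t x * (u1 (t+h) x - u1 t x))
         \<and> \<bar>T2 h\<bar> \<le> (LINT x|lborel. (\<bar>h\<bar> * (1 + Mq)) * \<bar>u2 t x\<bar>)"
      unfolding T2_def
    proof (rule int_bound)
      show "integrable lborel (\<lambda>x. (\<bar>h\<bar> * (1 + Mq)) * \<bar>u2 t x\<bar>)" using uX(6)[OF t] by auto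
      show "(\<lambda>x. u2 t x * (u1 (t+h) x - u1 t x)) \<in> borel_measurable lborel" by measurable
      show "AE x in lborel. \<bar>u2 t x * (u1 (t+h) x - u1 t x)\<bar> \<le> (\<bar>h\<bar> * (1 + Mq)) * \<bar>u2 t x\<bar>"
        using diff
      proof eventually_elim
        case (elim x)
        then have "\<bar>u2 t x\<bar> * \<bar>u1 (t+h) x - u1 t x\<bar> \<le> \<bar>u2 t x\<bar> * (\<bar>h\<bar> * (1 + Mq))"
          by (intro mult_left_mono) auto
        then show ?case by (simp add: abs_mult mult.commute)
      qed
    qed
    have iK1: "integrable lborel (\<lambda>x. (u1 (t+h) x)\<^sup>2)" by (rule int_K[OF th])
    have iK0: "integrable lborel (\<lambda>x. (u1 t x)\<^sup>2)" by (rule int_K[OF t])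
    have "((LINT x|lborel. (u1 (t+h) x)\<^sup>2) - (LINT x|lborel. (u1 t x)\<^sup>2)) / h
                 - 2 * (LINT x|lborel. u1 t x * u2 t x)
        = (LINT x|lborel. ((u1 (t+h) x)\<^sup>2 - (u1 t x)\<^sup>2) / h - 2 * (u1 t x * u2 t x))"
      using iK1 iK0 ivq by (simp add: integral_diff)
    also have "\<dots> = (LINT x|lborel. gd h x * (u1 (t+h) x + u1 t x) + u2 t x * (u1 (t+h) x - u1 t x))"
      by (rule Bochner_Integration.integral_cong[OF refl]) (use h0 in \<open>simp add: gd_def field_simps power2_eq_square\<close>)
    also have "\<dots> = T1 h + T2 h"
      unfolding T1_def T2_def using b1 b2 by (simp add: integral_add)
    finally show ?case using b1 b2 by simp
  qed
  have "((\<lambda>h. T1 h + T2 h) \<longlongrightarrow> 0) F"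
  proof -
    have "((\<lambda>h. T1 h) \<longlongrightarrow> 0) F"
    proof (rule Lim_null_comparison)
      show "\<forall>\<^sub>F h in F. norm (T1 h) \<le> (2 * Mv + 1) * (LINT x|lborel. \<bar>gd h x\<bar>)"
        using main by eventually_elim simp
      show "((\<lambda>h. (2 * Mv + 1) * (LINT x|lborel. \<bar>gd h x\<bar>)) \<longlongrightarrow> 0) F"
        using tendsto_mult_right_zero[OF XT(1)] by simp
    qed
    moreover have "((\<lambda>h. T2 h) \<longlongrightarrow> 0) F"
    proof (rule Lim_null_comparison)
      show "\<forall>\<^sub>F h in F. norm (T2 h) \<le> \<bar>h\<bar> * ((1 + Mq) * (LINT x|lborel. \<bar>u2 t x\<bar>))"
        using main by eventually_elim simp
      show "((\<lambda>h. \<bar>h\<bar> * ((1 + Mq) * (LINT x|lborel. \<bar>u2 t x\<bar>))) \<longlongrightarrow> 0) F"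
        unfolding F_def by (rule tendsto_mult_left_zero[OF abs_ident_tendsto])
    qed
    ultimately show ?thesis using tendsto_add_zero by blast
  qed
  then have "((\<lambda>h. ((LINT x|lborel. (u1 (t+h) x)\<^sup>2) - (LINT x|lborel. (u1 t x)\<^sup>2)) / h
                 - 2 * (LINT x|lborel. u1 t x * u2 t x)) \<longlongrightarrow> 0) F"
    by (rule Lim_transform_eventually) (use main in \<open>auto elim: eventually_mono\<close>)
  then show ?thesis unfolding F_def by (rule LIM_zero_cancel)
qed

end


lemma T1_point:
  fixes W w :: "real \<Rightarrow> real"
  assumes taylor: "\<forall>a b. \<bar>a\<bar> \<le> R \<longrightarrow> \<bar>b\<bar> \<le> R \<longrightarrow> \<bar>b - a\<bar> \<le> \<delta> \<longrightarrow> \<bar>W b - W a - w a * (b - a)\<bar> \<le> e * \<bar>b - a\<bar>"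
    and Us: "\<bar>Us\<bar> \<le> Mu" and Uf: "\<bar>Uf\<bar> \<le> Mu" and R: "R = 2*Mu + 2" and h0: "h \<noteq> 0"
    and hr: "\<bar>h\<bar> * (1 + Mv) \<le> min 1 \<delta> / 2"
    and ds: "\<bar>ds\<bar> \<le> 1" and df: "\<bar>df\<bar> \<le> 1" and vs: "\<bar>vs\<bar> \<le> Mv" and vf: "\<bar>vf\<bar> \<le> Mv" and e: "0 \<le> e"
    and Us': "Us' = Us + h*(ds + vs)" and Uf': "Uf' = Uf + h*(df + vf)"
  shows "\<bar>Aa * ((W (Us' - Uf') - W (Us - Uf))/h - w (Us - Uf) * ((Us' - Us)/h - (Uf' - Uf)/h))\<bar>
         \<le> e * (\<bar>Aa\<bar>*\<bar>ds\<bar> + \<bar>Aa\<bar>*\<bar>vs\<bar> + \<bar>Aa\<bar>*\<bar>df\<bar> + \<bar>Aa\<bar>*\<bar>vf\<bar>)"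
proof -
  have hs: "\<bar>h * (ds + vs)\<bar> \<le> min 1 \<delta> / 2"
  proof -
    have "\<bar>h * (ds + vs)\<bar> = \<bar>h\<bar> * \<bar>ds + vs\<bar>" by (simp add: abs_mult)
    also have "\<dots> \<le> \<bar>h\<bar> * (1 + Mv)" using ds vs by (intro mult_left_mono) auto
    finally show ?thesis using hr by linarith
  qed
  have hf: "\<bar>h * (df + vf)\<bar> \<le> min 1 \<delta> / 2"
  proof -
    have "\<bar>h * (df + vf)\<bar> = \<bar>h\<bar> * \<bar>df + vf\<bar>" by (simp add: abs_mult)
    also have "\<dots> \<le> \<bar>h\<bar> * (1 + Mv)" using df vf by (intro mult_left_mono) auto
    finally show ?thesis using hr by linarith
  qed
  define a where "a = Us - Uf"
  define b where "b = Us' - Uf'"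
  have ba: "b - a = h * ((ds + vs) - (df + vf))" unfolding a_def b_def Us' Uf' by (simp add: algebra_simps)
  have aR: "\<bar>a\<bar> \<le> R" using Us Uf R unfolding a_def by linarith
  have bR: "\<bar>b\<bar> \<le> R" using Us Uf R hs hf unfolding b_def Us' Uf' by (simp add: min_def split: if_splits) linarith?
  have bad: "\<bar>b - a\<bar> \<le> \<delta>" using hs hf ba by (simp add: right_diff_distrib min_def split: if_splits; linarith)
  have tay: "\<bar>W b - W a - w a * (b - a)\<bar> \<le> e * \<bar>b - a\<bar>" using taylor aR bR bad by blast
  have eq: "(W b - W a)/h - w a * ((Us' - Us)/h - (Uf' - Uf)/h) = (W b - W a - w a * (b - a)) / h"
    using h0 unfolding a_def b_def by (simp add: field_simps)
  have "\<bar>(W b - W a)/h - w a * ((Us' - Us)/h - (Uf' - Uf)/h)\<bar> \<le> e * \<bar>b - a\<bar> / \<bar>h\<bar>"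
    unfolding eq using tay h0 by (simp add: divide_right_mono)
  also have "e * \<bar>b - a\<bar> / \<bar>h\<bar> = e * \<bar>(ds + vs) - (df + vf)\<bar>"
    using h0 unfolding ba by (simp add: abs_mult)
  also have "\<dots> \<le> e * (\<bar>ds\<bar> + \<bar>vs\<bar> + \<bar>df\<bar> + \<bar>vf\<bar>)"
    using e by (intro mult_left_mono) auto
  finally have fin: "\<bar>Aa\<bar> * \<bar>(W b - W a)/h - w a * ((Us' - Us)/h - (Uf' - Uf)/h)\<bar>
      \<le> \<bar>Aa\<bar> * (e * (\<bar>ds\<bar> + \<bar>vs\<bar> + \<bar>df\<bar> + \<bar>vf\<bar>))"
    by (intro mult_left_mono) auto
  have eq1: "e * (\<bar>Aa\<bar>*\<bar>ds\<bar> + \<bar>Aa\<bar>*\<bar>vs\<bar> + \<bar>Aa\<bar>*\<bar>df\<bar> + \<bar>Aa\<bar>*\<bar>vf\<bar>)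
      = \<bar>Aa\<bar> * (e * (\<bar>ds\<bar> + \<bar>vs\<bar> + \<bar>df\<bar> + \<bar>vf\<bar>))" by (simp add: algebra_simps)
  have eq2: "\<bar>Aa * ((W (Us' - Uf') - W (Us - Uf))/h - w (Us - Uf) * ((Us' - Us)/h - (Uf' - Uf)/h))\<bar>
      = \<bar>Aa\<bar> * \<bar>(W b - W a)/h - w a * ((Us' - Us)/h - (Uf' - Uf)/h)\<bar>"
    unfolding a_def b_def by (simp only: abs_mult)
  show ?thesis using fin by (simp only: eq1 eq2)
qed


context en_setup
begin

lemma conv_both:
  assumes g: "integrable lborel g"
  shows "integrable PP (\<lambda>p. \<bar>\<alpha> (snd p - fst p)\<bar> * \<bar>g (snd p)\<bar> + \<bar>\<alpha> (snd p - fst p)\<bar> * \<bar>g (fst p)\<bar>)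
    \<and> (\<integral>p. \<bar>\<alpha> (snd p - fst p)\<bar> * \<bar>g (snd p)\<bar> + \<bar>\<alpha> (snd p - fst p)\<bar> * \<bar>g (fst p)\<bar> \<partial>PP)
       = 2 * ((LINT x|lborel. \<bar>\<alpha> x\<bar>) * (LINT x|lborel. \<bar>g x\<bar>))"
  using conv_snd[OF alpha_L1 g] conv_fst[OF alpha_L1 g] by (simp add: integral_add)

lemma PD:
  assumes t: "t \<in> I"
  shows "((\<lambda>h. ((LINT p|PP. \<alpha> (snd p - fst p) * Wpot w (u (t+h) (snd p) - u (t+h) (fst p)))
              - (LINT p|PP. \<alpha> (snd p - fst p) * Wpot w (u t (snd p) - u t (fst p)))) / h)
          \<longlongrightarrow> (\<integral>p. \<alpha> (snd p - fst p) * w (u t (snd p) - u t (fst p)) * u1 t (snd p) \<partial>PP)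
            - (\<integral>p. \<alpha> (snd p - fst p) * w (u t (snd p) - u t (fst p)) * u1 t (fst p) \<partial>PP))
         (at 0 within {h. t + h \<in> I})"
proof -
  define F where "F = at (0::real) within {h. t + h \<in> I}"
  define dd where "dd = (\<lambda>h x. (u (t + h) x - u t x) / h - u1 t x)"
  define Q1 where "Q1 = (\<integral>p. \<alpha> (snd p - fst p) * w (u t (snd p) - u t (fst p)) * u1 t (snd p) \<partial>PP)"
  define Q2 where "Q2 = (\<integral>p. \<alpha> (snd p - fst p) * w (u t (snd p) - u t (fst p)) * u1 t (fst p) \<partial>PP)"
  define Pf where "Pf = (\<lambda>s. LINT p|PP. \<alpha> (snd p - fst p) * Wpot w (u s (snd p) - u s (fst p)))"
  define T1 where "T1 = (\<lambda>h. \<integral>p. \<alpha> (snd p - fst p) * ((Wpot w (u (t+h) (snd p) - u (t+h) (fst p))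
       - Wpot w (u t (snd p) - u t (fst p))) / h - w (u t (snd p) - u t (fst p))
       * ((u (t+h) (snd p) - u t (snd p)) / h - (u (t+h) (fst p) - u t (fst p)) / h)) \<partial>PP)"
  define T2 where "T2 = (\<lambda>h. \<integral>p. \<alpha> (snd p - fst p) * w (u t (snd p) - u t (fst p))
       * (dd h (snd p) - dd h (fst p)) \<partial>PP)"
  define n\<alpha> where "n\<alpha> = (LINT x|lborel. \<bar>\<alpha> x\<bar>)"
  define nv where "nv = (LINT x|lborel. \<bar>u1 t x\<bar>)"
  note [measurable] = uX(1,2,3)[OF t]
  have lim: "((\<lambda>h. Xnorm (dd h)) \<longlongrightarrow> 0) F"
    using u_d1 t unfolding X_has_deriv_within_def F_def dd_def by blast
  have meas: "\<forall>\<^sub>F h in F. dd h \<in> borel_measurable lborel"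
    using ev_F[OF zero_less_one, of "{h. t + h \<in> I}"] unfolding F_def
  proof eventually_elim
    case (elim h)
    then have [measurable]: "u (t+h) \<in> borel_measurable borel" using uX(1) by auto
    show ?case unfolding dd_def by measurable
  qed
  note XT = Xnorm_tendsto[OF lim meas]
  have ev_n1: "\<forall>\<^sub>F h in F. (LINT x|lborel. \<bar>dd h x\<bar>) < 1"
    using order_tendstoD(2)[OF XT(1), of 1] by simp
  obtain Mu where Mu: "Mu \<ge> 0" "AE x in lborel. \<bar>u t x\<bar> \<le> Mu" using inX_bound[OF uX(7)[OF t]] by blast
  obtain Mv where Mv: "Mv \<ge> 0" "AE x in lborel. \<bar>u1 t x\<bar> \<le> Mv" using inX_bound[OF uX(8)[OF t]] by blast
  obtain C where C: "C \<ge> 0" "AE p in PP. \<bar>w (u t (snd p) - u t (fst p))\<bar> \<le> C" using w_ae[OF t] by blast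
  have n\<alpha>0: "n\<alpha> \<ge> 0" unfolding n\<alpha>_def by simp
  have nv0: "nv \<ge> 0" unfolding nv_def by simp
  have main: "\<forall>\<^sub>F h in F. (Pf (t+h) - Pf t) / h - (Q1 - Q2) = T1 h + T2 h
       \<and> \<bar>T2 h\<bar> \<le> C * (2 * (n\<alpha> * (LINT x|lborel. \<bar>dd h x\<bar>)))"
    using ev_F[OF zero_less_one, of "{h. t + h \<in> I}"] XT(3) unfolding F_def[symmetric]
  proof eventually_elim
    case (elim h)
    then have th: "t + h \<in> I" and h0: "h \<noteq> 0" by auto
    note [measurable] = uX(1)[OF th]
    have idd: "integrable lborel (dd h)" using elim by auto
    have ddm[measurable]: "dd h \<in> borel_measurable borel" unfolding dd_def by measurable
    note cb = conv_both[OF idd]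
    have b2: "integrable PP (\<lambda>p. \<alpha> (snd p - fst p) * w (u t (snd p) - u t (fst p)) * (dd h (snd p) - dd h (fst p)))
         \<and> \<bar>T2 h\<bar> \<le> (\<integral>p. C * (\<bar>\<alpha> (snd p - fst p)\<bar> * \<bar>dd h (snd p)\<bar> + \<bar>\<alpha> (snd p - fst p)\<bar> * \<bar>dd h (fst p)\<bar>) \<partial>PP)"
      unfolding T2_def
    proof (rule int_bound)
      show "integrable PP (\<lambda>p. C * (\<bar>\<alpha> (snd p - fst p)\<bar> * \<bar>dd h (snd p)\<bar> + \<bar>\<alpha> (snd p - fst p)\<bar> * \<bar>dd h (fst p)\<bar>))"
        using cb by auto
      show "(\<lambda>p. \<alpha> (snd p - fst p) * w (u t (snd p) - u t (fst p)) * (dd h (snd p) - dd h (fst p))) \<in> borel_measurable PP"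
        by measurable
      show "AE p in PP. \<bar>\<alpha> (snd p - fst p) * w (u t (snd p) - u t (fst p)) * (dd h (snd p) - dd h (fst p))\<bar>
          \<le> C * (\<bar>\<alpha> (snd p - fst p)\<bar> * \<bar>dd h (snd p)\<bar> + \<bar>\<alpha> (snd p - fst p)\<bar> * \<bar>dd h (fst p)\<bar>)"
        using C(2)
      proof eventually_elim
        case (elim p)
        have "\<bar>\<alpha> (snd p - fst p) * w (u t (snd p) - u t (fst p)) * (dd h (snd p) - dd h (fst p))\<bar>
           \<le> C * (\<bar>\<alpha> (snd p - fst p)\<bar> * \<bar>dd h (snd p) - dd h (fst p)\<bar>)"
          using elim by (rule abs3_bound)
        also have "\<dots> \<le> C * (\<bar>\<alpha> (snd p - fst p)\<bar> * \<bar>dd h (snd p)\<bar> + \<bar>\<alpha> (snd p - fst p)\<bar> * \<bar>dd h (fst p)\<bar>)"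
          using C(1) by (intro mult_left_mono) (auto simp: distrib_left[symmetric] intro!: mult_left_mono)
        finally show ?case .
      qed
    qed
    have T2b: "\<bar>T2 h\<bar> \<le> C * (2 * (n\<alpha> * (LINT x|lborel. \<bar>dd h x\<bar>)))"
      using b2 cb by (simp add: n\<alpha>_def)
    have b1: "integrable PP (\<lambda>p. \<alpha> (snd p - fst p) * ((Wpot w (u (t+h) (snd p) - u (t+h) (fst p))
       - Wpot w (u t (snd p) - u t (fst p))) / h - w (u t (snd p) - u t (fst p))
       * ((u (t+h) (snd p) - u t (snd p)) / h - (u (t+h) (fst p) - u t (fst p)) / h)))"
    proof -
      have "integrable PP (\<lambda>p. (\<alpha> (snd p - fst p) * Wpot w (u (t+h) (snd p) - u (t+h) (fst p))
          - \<alpha> (snd p - fst p) * Wpot w (u t (snd p) - u t (fst p))) / h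
          - (\<alpha> (snd p - fst p) * w (u t (snd p) - u t (fst p)) * u1 t (snd p)
             - \<alpha> (snd p - fst p) * w (u t (snd p) - u t (fst p)) * u1 t (fst p))
          - \<alpha> (snd p - fst p) * w (u t (snd p) - u t (fst p)) * (dd h (snd p) - dd h (fst p)))"
        using int_W[OF th] int_W[OF t] int_wv[OF t t] b2 by auto
      moreover have "(\<lambda>p. (\<alpha> (snd p - fst p) * Wpot w (u (t+h) (snd p) - u (t+h) (fst p))
          - \<alpha> (snd p - fst p) * Wpot w (u t (snd p) - u t (fst p))) / h
          - (\<alpha> (snd p - fst p) * w (u t (snd p) - u t (fst p)) * u1 t (snd p)
             - \<alpha> (snd p - fst p) * w (u t (snd p) - u t (fst p)) * u1 t (fst p))
          - \<alpha> (snd p - fst p) * w (u t (snd p) - u t (fst p)) * (dd h (snd p) - dd h (fst p)))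
        = (\<lambda>p. \<alpha> (snd p - fst p) * ((Wpot w (u (t+h) (snd p) - u (t+h) (fst p))
       - Wpot w (u t (snd p) - u t (fst p))) / h - w (u t (snd p) - u t (fst p))
       * ((u (t+h) (snd p) - u t (snd p)) / h - (u (t+h) (fst p) - u t (fst p)) / h)))"
        using h0 by (intro ext) (simp add: dd_def field_simps)
      ultimately show ?thesis by simp
    qed
    have "(Pf (t+h) - Pf t) / h - (Q1 - Q2)
        = (\<integral>p. (\<alpha> (snd p - fst p) * Wpot w (u (t+h) (snd p) - u (t+h) (fst p))
          - \<alpha> (snd p - fst p) * Wpot w (u t (snd p) - u t (fst p))) / h
          - (\<alpha> (snd p - fst p) * w (u t (snd p) - u t (fst p)) * u1 t (snd p)
             - \<alpha> (snd p - fst p) * w (u t (snd p) - u t (fst p)) * u1 t (fst p)) \<partial>PP)"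
      unfolding Pf_def Q1_def Q2_def using int_W[OF th] int_W[OF t] int_wv[OF t t]
      by (simp add: integral_diff)
    also have "\<dots> = (\<integral>p. \<alpha> (snd p - fst p) * ((Wpot w (u (t+h) (snd p) - u (t+h) (fst p))
       - Wpot w (u t (snd p) - u t (fst p))) / h - w (u t (snd p) - u t (fst p))
       * ((u (t+h) (snd p) - u t (snd p)) / h - (u (t+h) (fst p) - u t (fst p)) / h))
       + \<alpha> (snd p - fst p) * w (u t (snd p) - u t (fst p))
       * (dd h (snd p) - dd h (fst p)) \<partial>PP)"
      by (rule Bochner_Integration.integral_cong[OF refl]) (use h0 in \<open>simp add: dd_def field_simps\<close>)
    also have "\<dots> = T1 h + T2 h"
      unfolding T1_def T2_def using b1 b2 by (simp add: integral_add)
    finally show ?case using T2b by simp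
  qed
  have T2lim: "(T2 \<longlongrightarrow> 0) F"
  proof (rule Lim_null_comparison)
    show "\<forall>\<^sub>F h in F. norm (T2 h) \<le> C * (2 * (n\<alpha> * (LINT x|lborel. \<bar>dd h x\<bar>)))"
      using main by eventually_elim simp
    show "((\<lambda>h. C * (2 * (n\<alpha> * (LINT x|lborel. \<bar>dd h x\<bar>)))) \<longlongrightarrow> 0) F"
      by (intro tendsto_mult_right_zero XT(1))
  qed
  have T1lim: "(T1 \<longlongrightarrow> 0) F"
  proof (rule tendsto0_I)
    fix \<epsilon> :: real assume \<epsilon>: "0 < \<epsilon>"
    define K where "K = 2 * n\<alpha> + 2 * (n\<alpha> * nv) + 1"
    have "n\<alpha> * nv \<ge> 0" using n\<alpha>0 nv0 by simp
    then have K0: "K > 0" using n\<alpha>0 unfolding K_def by linarith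
    define e where "e = \<epsilon> / K"
    have e0: "e > 0" using \<epsilon> K0 by (simp add: e_def)
    define R where "R = 2 * Mu + 2"
    obtain \<delta> where \<delta>: "\<delta> > 0" "\<forall>a b. \<bar>a\<bar> \<le> R \<longrightarrow> \<bar>b\<bar> \<le> R \<longrightarrow> \<bar>b - a\<bar> \<le> \<delta> \<longrightarrow>
            \<bar>Wpot w b - Wpot w a - w a * (b - a)\<bar> \<le> e * \<bar>b - a\<bar>"
      using W_taylor[OF w_cont e0, of R] by blast
    define r where "r = min 1 \<delta> / (2 * (1 + Mv))"
    have r0: "r > 0" using \<delta>(1) Mv(1) by (simp add: r_def)
    show "\<forall>\<^sub>F h in F. \<bar>T1 h\<bar> \<le> \<epsilon>"
      using ev_F[OF r0, of "{h. t + h \<in> I}"] XT(2)[OF zero_less_one] XT(3) ev_n1 unfolding F_def[symmetric]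
    proof eventually_elim
      case (elim h)
      then have th: "t + h \<in> I" and h0: "h \<noteq> 0" and hr: "\<bar>h\<bar> < r" by auto
      note [measurable] = uX(1)[OF th]
      have idd: "integrable lborel (dd h)" using elim by auto
      have ddm[measurable]: "dd h \<in> borel_measurable borel" unfolding dd_def by measurable
      have hr': "\<bar>h\<bar> * (1 + Mv) \<le> min 1 \<delta> / 2"
      proof -
        have "\<bar>h\<bar> * (1 + Mv) \<le> r * (1 + Mv)" using hr Mv(1) by (intro mult_right_mono) auto
        also have "\<dots> = min 1 \<delta> / 2" using Mv(1) by (simp add: r_def field_simps)
        finally show ?thesis .
      qed
      note cd = conv_both[OF idd] and cv = conv_both[OF uX(5)[OF t]]
      have bi: "integrable PP (\<lambda>p. e * ((\<bar>\<alpha> (snd p - fst p)\<bar> * \<bar>dd h (snd p)\<bar> + \<bar>\<alpha> (snd p - fst p)\<bar> * \<bar>dd h (fst p)\<bar>)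
           + (\<bar>\<alpha> (snd p - fst p)\<bar> * \<bar>u1 t (snd p)\<bar> + \<bar>\<alpha> (snd p - fst p)\<bar> * \<bar>u1 t (fst p)\<bar>)))"
        using cd cv by auto
      have bv: "(\<integral>p. e * ((\<bar>\<alpha> (snd p - fst p)\<bar> * \<bar>dd h (snd p)\<bar> + \<bar>\<alpha> (snd p - fst p)\<bar> * \<bar>dd h (fst p)\<bar>)
           + (\<bar>\<alpha> (snd p - fst p)\<bar> * \<bar>u1 t (snd p)\<bar> + \<bar>\<alpha> (snd p - fst p)\<bar> * \<bar>u1 t (fst p)\<bar>)) \<partial>PP)
          = e * (2 * (n\<alpha> * (LINT x|lborel. \<bar>dd h x\<bar>)) + 2 * (n\<alpha> * nv))"
        using cd cv by (simp add: integral_add n\<alpha>_def nv_def)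
      have "\<bar>T1 h\<bar> \<le> (\<integral>p. e * ((\<bar>\<alpha> (snd p - fst p)\<bar> * \<bar>dd h (snd p)\<bar> + \<bar>\<alpha> (snd p - fst p)\<bar> * \<bar>dd h (fst p)\<bar>)
           + (\<bar>\<alpha> (snd p - fst p)\<bar> * \<bar>u1 t (snd p)\<bar> + \<bar>\<alpha> (snd p - fst p)\<bar> * \<bar>u1 t (fst p)\<bar>)) \<partial>PP)"
        unfolding T1_def
      proof (rule int_bound[THEN conjunct2, OF bi])
        show "(\<lambda>p. \<alpha> (snd p - fst p) * ((Wpot w (u (t+h) (snd p) - u (t+h) (fst p))
           - Wpot w (u t (snd p) - u t (fst p))) / h - w (u t (snd p) - u t (fst p))
           * ((u (t+h) (snd p) - u t (snd p)) / h - (u (t+h) (fst p) - u t (fst p)) / h))) \<in> borel_measurable PP"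
          by measurable
        show "AE p in PP. \<bar>\<alpha> (snd p - fst p) * ((Wpot w (u (t+h) (snd p) - u (t+h) (fst p))
           - Wpot w (u t (snd p) - u t (fst p))) / h - w (u t (snd p) - u t (fst p))
           * ((u (t+h) (snd p) - u t (snd p)) / h - (u (t+h) (fst p) - u t (fst p)) / h))\<bar>
           \<le> e * ((\<bar>\<alpha> (snd p - fst p)\<bar> * \<bar>dd h (snd p)\<bar> + \<bar>\<alpha> (snd p - fst p)\<bar> * \<bar>dd h (fst p)\<bar>)
           + (\<bar>\<alpha> (snd p - fst p)\<bar> * \<bar>u1 t (snd p)\<bar> + \<bar>\<alpha> (snd p - fst p)\<bar> * \<bar>u1 t (fst p)\<bar>))"
          using AE_lift_fst[OF Mu(2)] AE_lift_snd[OF Mu(2)] AE_lift_fst[OF Mv(2)] AE_lift_snd[OF Mv(2)]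
            AE_lift_fst[OF elim(2)] AE_lift_snd[OF elim(2)]
        proof eventually_elim
          case (elim p)
          have "\<bar>\<alpha> (snd p - fst p) * ((Wpot w (u (t+h) (snd p) - u (t+h) (fst p))
           - Wpot w (u t (snd p) - u t (fst p))) / h - w (u t (snd p) - u t (fst p))
           * ((u (t+h) (snd p) - u t (snd p)) / h - (u (t+h) (fst p) - u t (fst p)) / h))\<bar>
           \<le> e * (\<bar>\<alpha> (snd p - fst p)\<bar>*\<bar>dd h (snd p)\<bar> + \<bar>\<alpha> (snd p - fst p)\<bar>*\<bar>u1 t (snd p)\<bar>
                + \<bar>\<alpha> (snd p - fst p)\<bar>*\<bar>dd h (fst p)\<bar> + \<bar>\<alpha> (snd p - fst p)\<bar>*\<bar>u1 t (fst p)\<bar>)"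
            by (rule T1_point[OF \<delta>(2)]) (use elim h0 hr' e0 R_def in \<open>auto simp: dd_def\<close>)
          then show ?case by (simp add: algebra_simps)
        qed
      qed
      also have "\<dots> = e * (2 * (n\<alpha> * (LINT x|lborel. \<bar>dd h x\<bar>)) + 2 * (n\<alpha> * nv))" by (rule bv)
      also have "\<dots> \<le> e * (2 * n\<alpha> + 2 * (n\<alpha> * nv))"
        using elim(4) n\<alpha>0 e0 by (intro mult_left_mono) (auto intro: mult_left_le)
      also have "\<dots> \<le> e * K" using e0 by (simp add: K_def)
      also have "\<dots> = \<epsilon>" using K0 by (simp add: e_def)
      finally show ?case .
    qed
  qed
  have "((\<lambda>h. (Pf (t+h) - Pf t) / h - (Q1 - Q2)) \<longlongrightarrow> 0) F"
    by (rule Lim_transform_eventually[OF tendsto_add_zero[OF T1lim T2lim]])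
       (use main in \<open>auto elim: eventually_mono\<close>)
  then show ?thesis unfolding F_def Pf_def Q1_def Q2_def by (rule LIM_zero_cancel)
qed

end

context en_setup
begin

lemma ED:
  assumes t: "t \<in> I"
  shows "((\<lambda>h. (energy \<alpha> w u u1 (t+h) - energy \<alpha> w u u1 t) / h) \<longlongrightarrow> 0) (at 0 within {h. t + h \<in> I})"
proof -
  let ?X = "LINT x|lborel. u1 t x * u2 t x"
  have "((\<lambda>h. 1/2 * (((LINT x|lborel. (u1 (t+h) x)\<^sup>2) - (LINT x|lborel. (u1 t x)\<^sup>2)) / h)
      + 1/2 * (((LINT p|PP. \<alpha> (snd p - fst p) * Wpot w (u (t+h) (snd p) - u (t+h) (fst p)))
              - (LINT p|PP. \<alpha> (snd p - fst p) * Wpot w (u t (snd p) - u t (fst p)))) / h))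
      \<longlongrightarrow> 1/2 * (2 * ?X) + 1/2 * ((\<integral>p. \<alpha> (snd p - fst p) * w (u t (snd p) - u t (fst p)) * u1 t (snd p) \<partial>PP)
            - (\<integral>p. \<alpha> (snd p - fst p) * w (u t (snd p) - u t (fst p)) * u1 t (fst p) \<partial>PP)))
     (at 0 within {h. t + h \<in> I})"
    by (intro tendsto_intros KD[OF t] PD[OF t])
  also have "1/2 * (2 * ?X) + 1/2 * ((\<integral>p. \<alpha> (snd p - fst p) * w (u t (snd p) - u t (fst p)) * u1 t (snd p) \<partial>PP)
            - (\<integral>p. \<alpha> (snd p - fst p) * w (u t (snd p) - u t (fst p)) * u1 t (fst p) \<partial>PP)) = 0"
    using sym1[OF t] sym2[OF t] by simp
  finally show ?thesis
    by (rule Lim_transform_eventually) (auto simp: energy_def diff_divide_distrib add_divide_distrib algebra_simps)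
qed

end

lemma deriv_from_shift:
  fixes f :: "real \<Rightarrow> real"
  assumes "((\<lambda>h. (f (t+h) - f t)/h) \<longlongrightarrow> D) (at 0 within {h. t + h \<in> S})"
  shows "(f has_field_derivative D) (at t within S)"
proof -
  have fl: "filterlim (\<lambda>y. y - t) (at 0 within {h. t + h \<in> S}) (at t within S)"
    unfolding filterlim_at
  proof
    show "\<forall>\<^sub>F y in at t within S. y - t \<in> {h. t + h \<in> S} \<and> y - t \<noteq> 0"
      unfolding eventually_at_filter by (auto intro: always_eventually)
    show "((\<lambda>y. y - t) \<longlongrightarrow> 0) (at t within S)"
      using tendsto_diff[OF tendsto_ident_at[of t S] tendsto_const[of t]] by simp
  qed
  have "((\<lambda>y. (f (t + (y - t)) - f t) / (y - t)) \<longlongrightarrow> D) (at t within S)"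
    using filterlim_compose[OF assms fl] by simp
  then show ?thesis unfolding has_field_derivative_iff by simp
qed

theorem lemma4p1:
  fixes \<alpha> w \<phi> \<psi> :: "real \<Rightarrow> real"
    and u u1 u2 :: "real \<Rightarrow> real \<Rightarrow> real"
    and T :: ereal
  defines "I \<equiv> {t::real. 0 \<le> t \<and> ereal t < T}"
  assumes alpha_L1: "integrable lborel \<alpha>"
    and alpha_even: "AE x in lborel. \<alpha> (- x) = \<alpha> x"
    and w_C1: "w C1_differentiable_on UNIV"
    and w_odd: "\<forall>x. w (- x) = - w x"
    and w0: "w 0 = 0"
    and phi: "inX \<phi>" and psi: "inX \<psi>"
    and u_X: "\<forall>t\<in>I. inX (u t) \<and> inX (u1 t) \<and> inX (u2 t)"
    and u_d1: "\<forall>t\<in>I. X_has_deriv_within u u1 t I"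
    and u_d2: "\<forall>t\<in>I. X_has_deriv_within u1 u2 t I"
    and u2_cont: "X_continuous_on I u2"
    and eqn: "\<forall>t\<in>I. AE x in lborel.
                u2 t x = (LINT y|lborel. \<alpha> (y - x) * w (u t y - u t x))"
    and init_u: "AE x in lborel. u 0 x = \<phi> x"
    and init_ut: "AE x in lborel. u1 0 x = \<psi> x"
  shows "(\<forall>t\<in>I. integrable lborel (\<lambda>x. (u1 t x)\<^sup>2)
              \<and> integrable (lborel \<Otimes>\<^sub>M lborel)
                   (\<lambda>p. \<alpha> (snd p - fst p) * Wpot w (u t (snd p) - u t (fst p))))
       \<and> (\<forall>t\<in>I. \<forall>s\<in>I. energy \<alpha> w u u1 t = energy \<alpha> w u u1 s)"
proof -
  have wc: "continuous_on UNIV w"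
    using w_C1 unfolding C1_differentiable_on_eq
    by (meson continuous_at_imp_continuous_on differentiable_imp_continuous_within)
  interpret en: en_setup \<alpha> w u u1 u2 I
    by unfold_locales (use alpha_L1 alpha_even wc w_odd u_X u_d1 u_d2 eqn in auto)
  have part1: "\<forall>t\<in>I. integrable lborel (\<lambda>x. (u1 t x)\<^sup>2)
              \<and> integrable (lborel \<Otimes>\<^sub>M lborel)
                   (\<lambda>p. \<alpha> (snd p - fst p) * Wpot w (u t (snd p) - u t (fst p)))"
    using en.int_K en.int_W by blast
  have cI: "convex I"
    unfolding I_def is_interval_convex_1[symmetric] is_interval_1
    by auto (meson ereal_less_eq(3) le_less_trans)
  have "\<exists>c. \<forall>x\<in>I. energy \<alpha> w u u1 x = c"
  proof (rule has_field_derivative_zero_constant[OF cI])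
    fix x assume "x \<in> I"
    then show "(energy \<alpha> w u u1 has_field_derivative 0) (at x within I)"
      by (intro deriv_from_shift en.ED)
  qed
  then have "\<forall>t\<in>I. \<forall>s\<in>I. energy \<alpha> w u u1 t = energy \<alpha> w u u1 s" by metis
  with part1 show ?thesis by blast
qed

end
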